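(* For all types $A,B$, if $A\equiv B$ then $[\![A]\!]=[\![B]\!]$.
   Context: Terms: $t,s,u ::= x \mid \lambda x.t \mid ts \mid \langle t,s\rangle \mid \pi_1 t \mid \pi_2 t$ (up to $\alpha$-renaming). Top-level rules: $(\lambda x.t)s \mapsto t\{x:=s\}$; $\pi_i\langle t_1,t_2\rangle \mapsto t_i$ ($i=1,2$); $\langle t,s\rangle u \mapsto \langle tu, su\rangle$; $\pi_i(\lambda x.t)\mapsto \lambda x.\pi_i t$ ($i=1,2$); $\to_{\mathsf{dist}}$ is the closure of these rules under all term constructors. $\mathrm{SN}$ is the set of strongly normalizing terms for $\to_{\mathsf{dist}}$. Types: $A ::= \tau \mid A\Rightarrow A \mid A\wedge A$ with $\tau$ a single atomic type. The relation $\equiv$ on types is the smallest equivalence relation containing $A\Rightarrow (B\wedge C)\equiv (A\Rightarrow B)\wedge(A\Rightarrow C)$ for all $A,B,C$ and closed under congruence for $\Rightarrow$ and $\wedge$ in both arguments. Interpretation: $[\![\tau]\!]=\mathrm{SN}$; $[\![A\Rightarrow B]\!]=\{t\mid \forall s\in[\![A]\!],\ ts\in[\![B]\!]\}$; $[\![A\wedge B]\!]=\{t\mid \pi_1t\in[\![A]\!]\text{ and }\pi_2 t\in[\![B]\!]\}$. *)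

theory Defs
  imports Main
begin

(* Terms up to alpha-renaming, represented with de Bruijn indices. *)
datatype trm = Var nat | Lam trm | App trm trm | Pair trm trm | Pi1 trm | Pi2 trm

primrec lift :: "trm \<Rightarrow> nat \<Rightarrow> trm" where
  "lift (Var i) k = (if i < k then Var i else Var (Suc i))"
| "lift (Lam t) k = Lam (lift t (Suc k))"
| "lift (App t s) k = App (lift t k) (lift s k)"
| "lift (Pair t s) k = Pair (lift t k) (lift s k)"
| "lift (Pi1 t) k = Pi1 (lift t k)"
| "lift (Pi2 t) k = Pi2 (lift t k)"

primrec subst :: "trm \<Rightarrow> trm \<Rightarrow> nat \<Rightarrow> trm" where
  "subst (Var i) s k = (if k < i then Var (i - 1) else if i = k then s else Var i)"
| "subst (Lam t) s k = Lam (subst t (lift s 0) (Suc k))"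
| "subst (App t u) s k = App (subst t s k) (subst u s k)"
| "subst (Pair t u) s k = Pair (subst t s k) (subst u s k)"
| "subst (Pi1 t) s k = Pi1 (subst t s k)"
| "subst (Pi2 t) s k = Pi2 (subst t s k)"

inductive dist :: "trm \<Rightarrow> trm \<Rightarrow> bool" (infix "\<rightarrow>\<^sub>d" 50) where
  beta: "App (Lam t) s \<rightarrow>\<^sub>d subst t s 0"
| proj1: "Pi1 (Pair t1 t2) \<rightarrow>\<^sub>d t1"
| proj2: "Pi2 (Pair t1 t2) \<rightarrow>\<^sub>d t2"
| app_pair: "App (Pair t s) u \<rightarrow>\<^sub>d Pair (App t u) (App s u)"
| proj1_lam: "Pi1 (Lam t) \<rightarrow>\<^sub>d Lam (Pi1 t)"
| proj2_lam: "Pi2 (Lam t) \<rightarrow>\<^sub>d Lam (Pi2 t)"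
| lam: "t \<rightarrow>\<^sub>d t' \<Longrightarrow> Lam t \<rightarrow>\<^sub>d Lam t'"
| appL: "t \<rightarrow>\<^sub>d t' \<Longrightarrow> App t s \<rightarrow>\<^sub>d App t' s"
| appR: "s \<rightarrow>\<^sub>d s' \<Longrightarrow> App t s \<rightarrow>\<^sub>d App t s'"
| pairL: "t \<rightarrow>\<^sub>d t' \<Longrightarrow> Pair t s \<rightarrow>\<^sub>d Pair t' s"
| pairR: "s \<rightarrow>\<^sub>d s' \<Longrightarrow> Pair t s \<rightarrow>\<^sub>d Pair t s'"
| pi1: "t \<rightarrow>\<^sub>d t' \<Longrightarrow> Pi1 t \<rightarrow>\<^sub>d Pi1 t'"
| pi2: "t \<rightarrow>\<^sub>d t' \<Longrightarrow> Pi2 t \<rightarrow>\<^sub>d Pi2 t'"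

definition SN :: "trm set" where
  "SN = {t. Wellfounded.accp (\<lambda>y x. x \<rightarrow>\<^sub>d y) t}"

datatype ty = Atom | Fun ty ty | Conj ty ty

inductive typ_eq :: "ty \<Rightarrow> ty \<Rightarrow> bool" (infix "\<equiv>\<^sub>T" 50) where
  ax: "Fun A (Conj B C) \<equiv>\<^sub>T Conj (Fun A B) (Fun A C)"
| refl: "A \<equiv>\<^sub>T A"
| sym: "A \<equiv>\<^sub>T B \<Longrightarrow> B \<equiv>\<^sub>T A"
| trans: "A \<equiv>\<^sub>T B \<Longrightarrow> B \<equiv>\<^sub>T C \<Longrightarrow> A \<equiv>\<^sub>T C"
| cong_fun: "A \<equiv>\<^sub>T A' \<Longrightarrow> B \<equiv>\<^sub>T B' \<Longrightarrow> Fun A B \<equiv>\<^sub>T Fun A' B'"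
| cong_conj: "A \<equiv>\<^sub>T A' \<Longrightarrow> B \<equiv>\<^sub>T B' \<Longrightarrow> Conj A B \<equiv>\<^sub>T Conj A' B'"

primrec interp :: "ty \<Rightarrow> trm set" where
  "interp Atom = SN"
| "interp (Fun A B) = {t. \<forall>s \<in> interp A. App t s \<in> interp B}"
| "interp (Conj A B) = {t. Pi1 t \<in> interp A \<and> Pi2 t \<in> interp B}"

end

theory Submission
  imports Defs
begin

lemma SN_I: "(\<And>t'. t \<rightarrow>\<^sub>d t' \<Longrightarrow> t' \<in> SN) \<Longrightarrow> t \<in> SN"
  unfolding SN_def by (auto intro: accp.accI)

lemma SN_step: "t \<in> SN \<Longrightarrow> t \<rightarrow>\<^sub>d t' \<Longrightarrow> t' \<in> SN"
  unfolding SN_def by (auto intro: accp_downward)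

lemma SN_induct[consumes 1, case_names step]:
  assumes "t \<in> SN"
    and "\<And>t. t \<in> SN \<Longrightarrow> (\<And>t'. t \<rightarrow>\<^sub>d t' \<Longrightarrow> P t') \<Longrightarrow> P t"
  shows "P t"
proof -
  have "Wellfounded.accp (\<lambda>y x. x \<rightarrow>\<^sub>d y) t" using assms(1) by (simp add: SN_def)
  then show ?thesis
  proof (induction rule: accp.induct)
    case (accI x)
    show ?case
      by (rule assms(2)) (auto simp: SN_def intro: Wellfounded.accp.accI accI)
  qed
qed

lemma SN_reflect:
  assumes mono: "\<And>a b. a \<rightarrow>\<^sub>d b \<Longrightarrow> f a \<rightarrow>\<^sub>d f b"
    and "f t \<in> SN"
  shows "t \<in> SN"
proof -
  have "\<forall>u. x = f u \<longrightarrow> u \<in> SN" if "x \<in> SN" for x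
    using that
  proof (induction rule: SN_induct)
    case (step x)
    show ?case
    proof (intro allI impI)
      fix u assume "x = f u"
      show "u \<in> SN"
        by (rule SN_I) (use step.IH mono \<open>x = f u\<close> in blast)
    qed
  qed
  then show ?thesis using assms(2) by blast
qed

lemma inv_Var: "\<not> Var n \<rightarrow>\<^sub>d v"
  by (auto elim: dist.cases)

lemma inv_App: "App t s \<rightarrow>\<^sub>d v \<Longrightarrow>
  (\<exists>u. t = Lam u \<and> v = subst u s 0) \<or> (\<exists>a b. t = Pair a b \<and> v = Pair (App a s) (App b s))
  \<or> (\<exists>t'. t \<rightarrow>\<^sub>d t' \<and> v = App t' s) \<or> (\<exists>s'. s \<rightarrow>\<^sub>d s' \<and> v = App t s')"
  by (erule dist.cases) auto

lemma inv_Pi1: "Pi1 t \<rightarrow>\<^sub>d v \<Longrightarrow>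
  (\<exists>a b. t = Pair a b \<and> v = a) \<or> (\<exists>u. t = Lam u \<and> v = Lam (Pi1 u)) \<or> (\<exists>t'. t \<rightarrow>\<^sub>d t' \<and> v = Pi1 t')"
  by (erule dist.cases) auto

lemma inv_Pi2: "Pi2 t \<rightarrow>\<^sub>d v \<Longrightarrow>
  (\<exists>a b. t = Pair a b \<and> v = b) \<or> (\<exists>u. t = Lam u \<and> v = Lam (Pi2 u)) \<or> (\<exists>t'. t \<rightarrow>\<^sub>d t' \<and> v = Pi2 t')"
  by (erule dist.cases) auto

lemma inv_Lam: "Lam t \<rightarrow>\<^sub>d v \<Longrightarrow> \<exists>t'. t \<rightarrow>\<^sub>d t' \<and> v = Lam t'"
  by (erule dist.cases) auto

lemma inv_Pair: "Pair a b \<rightarrow>\<^sub>d v \<Longrightarrow> (\<exists>a'. a \<rightarrow>\<^sub>d a' \<and> v = Pair a' b) \<or> (\<exists>b'. b \<rightarrow>\<^sub>d b' \<and> v = Pair a b')"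
  by (erule dist.cases) auto

section \<open>de Bruijn lemmas\<close>

lemma lift_lift: "i < k + 1 \<Longrightarrow> lift (lift t i) (Suc k) = lift (lift t k) i"
  by (induct t arbitrary: i k) auto

lemma lift_subst [simp]:
  "j < i + 1 \<Longrightarrow> lift (subst t s j) i = subst (lift t (i + 1)) (lift s i) j"
  by (induct t arbitrary: i j s) (simp_all add: diff_Suc lift_lift split: nat.split)

lemma lift_subst_lt:
  "i < j + 1 \<Longrightarrow> lift (subst t s j) i = subst (lift t i) (lift s i) (j + 1)"
  by (induct t arbitrary: i j s) (auto simp: lift_lift)

lemma subst_lift [simp]: "subst (lift t k) s k = t"
  by (induct t arbitrary: k s) simp_all

lemma subst_subst:
  "i < j + 1 \<Longrightarrow> subst (subst t (lift v i) (Suc j)) (subst u v j) i = subst (subst t u i) v j"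
  by (induct t arbitrary: i j u v)
    (simp_all add: diff_Suc lift_lift [symmetric] lift_subst_lt split: nat.split)

lemma lift_preserves: "r \<rightarrow>\<^sub>d s \<Longrightarrow> lift r i \<rightarrow>\<^sub>d lift s i"
  by (induct arbitrary: i rule: dist.induct) (auto intro: dist.intros)

lemma subst_preserves: "r \<rightarrow>\<^sub>d s \<Longrightarrow> subst r t i \<rightarrow>\<^sub>d subst s t i"
proof (induct arbitrary: t i rule: dist.induct)
  case (beta u s)
  have "subst (App (Lam u) s) t i \<rightarrow>\<^sub>d subst (subst u (lift t 0) (Suc i)) (subst s t i) 0"
    by (simp add: dist.beta)
  also have "subst (subst u (lift t 0) (Suc i)) (subst s t i) 0 = subst (subst u s 0) t i"
    using subst_subst[of 0 i u t s] by simp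
  finally show ?case .
qed (auto intro: dist.intros)

lemma rt_Lam: "dist\<^sup>*\<^sup>* a a' \<Longrightarrow> dist\<^sup>*\<^sup>* (Lam a) (Lam a')"
  by (induct rule: rtranclp_induct) (auto intro: rtranclp.rtrancl_into_rtrancl dist.intros)
lemma rt_AppL: "dist\<^sup>*\<^sup>* a a' \<Longrightarrow> dist\<^sup>*\<^sup>* (App a b) (App a' b)"
  by (induct rule: rtranclp_induct) (auto intro: rtranclp.rtrancl_into_rtrancl dist.intros)
lemma rt_AppR: "dist\<^sup>*\<^sup>* a a' \<Longrightarrow> dist\<^sup>*\<^sup>* (App b a) (App b a')"
  by (induct rule: rtranclp_induct) (auto intro: rtranclp.rtrancl_into_rtrancl dist.intros)
lemma rt_PairL: "dist\<^sup>*\<^sup>* a a' \<Longrightarrow> dist\<^sup>*\<^sup>* (Pair a b) (Pair a' b)"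
  by (induct rule: rtranclp_induct) (auto intro: rtranclp.rtrancl_into_rtrancl dist.intros)
lemma rt_PairR: "dist\<^sup>*\<^sup>* a a' \<Longrightarrow> dist\<^sup>*\<^sup>* (Pair b a) (Pair b a')"
  by (induct rule: rtranclp_induct) (auto intro: rtranclp.rtrancl_into_rtrancl dist.intros)
lemma rt_Pi1: "dist\<^sup>*\<^sup>* a a' \<Longrightarrow> dist\<^sup>*\<^sup>* (Pi1 a) (Pi1 a')"
  by (induct rule: rtranclp_induct) (auto intro: rtranclp.rtrancl_into_rtrancl dist.intros)
lemma rt_Pi2: "dist\<^sup>*\<^sup>* a a' \<Longrightarrow> dist\<^sup>*\<^sup>* (Pi2 a) (Pi2 a')"
  by (induct rule: rtranclp_induct) (auto intro: rtranclp.rtrancl_into_rtrancl dist.intros)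

lemma subst_preserves2: "r \<rightarrow>\<^sub>d s \<Longrightarrow> dist\<^sup>*\<^sup>* (subst t r i) (subst t s i)"
proof (induct t arbitrary: r s i)
  case (Var n) then show ?case by auto
next
  case (Lam t) then show ?case by (simp add: rt_Lam lift_preserves)
next
  case (App t1 t2) then show ?case
    by (simp add: rtranclp_trans[OF rt_AppL rt_AppR])
next
  case (Pair t1 t2) then show ?case
    by (simp add: rtranclp_trans[OF rt_PairL rt_PairR])
next
  case (Pi1 t) then show ?case by (auto intro: rt_Pi1)
next
  case (Pi2 t) then show ?case by (auto intro: rt_Pi2)
qed

section \<open>Candidates\<close>

definition neutral :: "trm \<Rightarrow> bool" where
  "neutral t = (case t of Lam _ \<Rightarrow> False | Pair _ _ \<Rightarrow> False | _ \<Rightarrow> True)"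

definition cand :: "trm set \<Rightarrow> bool" where
  "cand X \<longleftrightarrow> X \<subseteq> SN \<and> (\<forall>t t'. t \<in> X \<longrightarrow> t \<rightarrow>\<^sub>d t' \<longrightarrow> t' \<in> X)
     \<and> (\<forall>t. neutral t \<longrightarrow> (\<forall>t'. t \<rightarrow>\<^sub>d t' \<longrightarrow> t' \<in> X) \<longrightarrow> t \<in> X)"

lemma cand_SN: "cand X \<Longrightarrow> t \<in> X \<Longrightarrow> t \<in> SN"
  unfolding cand_def by blast
lemma cand_step: "cand X \<Longrightarrow> t \<in> X \<Longrightarrow> t \<rightarrow>\<^sub>d t' \<Longrightarrow> t' \<in> X"
  unfolding cand_def by blast
lemma cand_neutral: "cand X \<Longrightarrow> neutral t \<Longrightarrow> (\<And>t'. t \<rightarrow>\<^sub>d t' \<Longrightarrow> t' \<in> X) \<Longrightarrow> t \<in> X"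
  unfolding cand_def by blast
lemma cand_steps: "cand X \<Longrightarrow> t \<in> X \<Longrightarrow> dist\<^sup>*\<^sup>* t t' \<Longrightarrow> t' \<in> X"
proof -
  assume c: "cand X" and "t \<in> X" and r: "dist\<^sup>*\<^sup>* t t'"
  from r show ?thesis by (induct rule: rtranclp_induct) (use c \<open>t \<in> X\<close> cand_step in blast)+
qed
lemma cand_Var: "cand X \<Longrightarrow> Var n \<in> X"
  by (rule cand_neutral) (auto simp: neutral_def inv_Var)

lemma cand_interp: "cand (interp A)"
proof (induct A)
  case Atom
  show ?case unfolding cand_def by (auto intro: SN_step SN_I)
next
  case (Fun A B)
  let ?X = "interp A" and ?Y = "interp B"
  have c1: "interp (Fun A B) \<subseteq> SN"
  proof
    fix t assume "t \<in> interp (Fun A B)"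
    then have "App t (Var 0) \<in> ?Y" using cand_Var[OF Fun(1)] by simp
    then have "App t (Var 0) \<in> SN" using cand_SN[OF Fun(2)] by blast
    then show "t \<in> SN" by (rule SN_reflect[rotated]) (rule dist.appL)
  qed
  have c2: "t' \<in> interp (Fun A B)" if "t \<in> interp (Fun A B)" "t \<rightarrow>\<^sub>d t'" for t t'
    using that cand_step[OF Fun(2)] by (auto intro: dist.appL)
  have c3: "t \<in> interp (Fun A B)" if n: "neutral t" and h: "\<forall>t'. t \<rightarrow>\<^sub>d t' \<longrightarrow> t' \<in> interp (Fun A B)" for t
  proof (simp, intro ballI)
    fix s assume "s \<in> ?X"
    then have "s \<in> SN" using cand_SN[OF Fun(1)] by blast
    then show "App t s \<in> ?Y" using \<open>s \<in> ?X\<close>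
    proof (induction rule: SN_induct)
      case (step s)
      show ?case
      proof (rule cand_neutral[OF Fun(2)])
        show "neutral (App t s)" by (simp add: neutral_def)
      next
        fix v assume "App t s \<rightarrow>\<^sub>d v"
        then show "v \<in> ?Y"
          using inv_App[of t s v] n h step cand_step[OF Fun(1)] by (auto simp: neutral_def)
      qed
    qed
  qed
  show ?case using c1 c2 c3 unfolding cand_def by blast
next
  case (Conj A B)
  have c1: "interp (Conj A B) \<subseteq> SN"
  proof
    fix t assume "t \<in> interp (Conj A B)"
    then have "Pi1 t \<in> SN" using cand_SN[OF Conj(1)] by simp
    then show "t \<in> SN" by (rule SN_reflect[rotated]) (rule dist.pi1)
  qed
  have c2: "t' \<in> interp (Conj A B)" if "t \<in> interp (Conj A B)" "t \<rightarrow>\<^sub>d t'" for t t'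
  proof -
    have "Pi1 t \<in> interp A" "Pi2 t \<in> interp B" using that(1) by simp_all
    then have "Pi1 t' \<in> interp A" "Pi2 t' \<in> interp B"
      using cand_step[OF Conj(1)] cand_step[OF Conj(2)] dist.pi1[OF that(2)] dist.pi2[OF that(2)] by blast+
    then show ?thesis by simp
  qed
  have c3: "t \<in> interp (Conj A B)" if n: "neutral t" and h: "\<forall>t'. t \<rightarrow>\<^sub>d t' \<longrightarrow> t' \<in> interp (Conj A B)" for t
  proof -
    have "Pi1 t \<in> interp A"
    proof (rule cand_neutral[OF Conj(1)])
      fix v assume "Pi1 t \<rightarrow>\<^sub>d v"
      then show "v \<in> interp A" using inv_Pi1[of t v] n h by (auto simp: neutral_def)
    qed (simp add: neutral_def)
    moreover have "Pi2 t \<in> interp B"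
    proof (rule cand_neutral[OF Conj(2)])
      fix v assume "Pi2 t \<rightarrow>\<^sub>d v"
      then show "v \<in> interp B" using inv_Pi2[of t v] n h by (auto simp: neutral_def)
    qed (simp add: neutral_def)
    ultimately show ?thesis by simp
  qed
  show ?case using c1 c2 c3 unfolding cand_def by blast
qed


lemma subst_SN: "subst w s k \<in> SN \<Longrightarrow> w \<in> SN"
  by (rule SN_reflect[of "\<lambda>w. subst w s k"]) (auto intro: subst_preserves)

lemma cand_Pi1_Pair:
  assumes c: "cand X" and "p \<in> X" and "q \<in> SN"
  shows "Pi1 (Pair p q) \<in> X"
proof -
  have "p \<in> SN" using c \<open>p \<in> X\<close> by (rule cand_SN)
  then show ?thesis using \<open>p \<in> X\<close> \<open>q \<in> SN\<close>
  proof (induction p arbitrary: q rule: SN_induct)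
    case (step p)
    note outer = step.IH
    from step.prems(2) show ?case using step.prems(1)
    proof (induction q rule: SN_induct)
      case (step q)
      show ?case
      proof (rule cand_neutral[OF c])
        fix v assume "Pi1 (Pair p q) \<rightarrow>\<^sub>d v"
        then consider "v = p" | r where "Pair p q \<rightarrow>\<^sub>d r" "v = Pi1 r"
          using inv_Pi1[of "Pair p q" v] by auto
        then show "v \<in> X"
        proof cases
          case 1 then show ?thesis using step.prems by simp
        next
          case 2
          from inv_Pair[OF 2(1)] show ?thesis
          proof (elim disjE exE conjE)
            fix a' assume "p \<rightarrow>\<^sub>d a'" "r = Pair a' q"
            then show ?thesis using 2 step.hyps step.prems outer cand_step[OF c] by auto
          next
            fix b' assume "q \<rightarrow>\<^sub>d b'" "r = Pair p b'"
            then show ?thesis using 2 step.prems by (auto intro!: step.IH)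
          qed
        qed
      qed (simp add: neutral_def)
    qed
  qed
qed


lemma cand_Pi2_Pair:
  assumes c: "cand X" and "p \<in> X" and "q \<in> SN"
  shows "Pi2 (Pair q p) \<in> X"
proof -
  have "p \<in> SN" using c \<open>p \<in> X\<close> by (rule cand_SN)
  then show ?thesis using \<open>p \<in> X\<close> \<open>q \<in> SN\<close>
  proof (induction p arbitrary: q rule: SN_induct)
    case (step p)
    note outer = step.IH
    from step.prems(2) show ?case using step.prems(1)
    proof (induction q rule: SN_induct)
      case (step q)
      show ?case
      proof (rule cand_neutral[OF c])
        fix v assume "Pi2 (Pair q p) \<rightarrow>\<^sub>d v"
        then consider "v = p" | r where "Pair q p \<rightarrow>\<^sub>d r" "v = Pi2 r"
          using inv_Pi2[of "Pair q p" v] by auto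
        then show "v \<in> X"
        proof cases
          case 1 then show ?thesis using step.prems by simp
        next
          case 2
          from inv_Pair[OF 2(1)] show ?thesis
          proof (elim disjE exE conjE)
            fix a' assume "p \<rightarrow>\<^sub>d a'" "r = Pair q a'"
            then show ?thesis using 2 step.hyps step.prems outer cand_step[OF c] by auto
          next
            fix b' assume "q \<rightarrow>\<^sub>d b'" "r = Pair b' p"
            then show ?thesis using 2 step.prems by (auto intro!: step.IH)
          qed
        qed
      qed (simp add: neutral_def)
    qed
  qed
qed

lemma head_exp:
  assumes c: "cand X" and "w \<in> SN" and "s \<in> SN" and "subst w s 0 \<in> X"
  shows "App (Lam w) s \<in> X"
  using assms(2-4)
proof (induction w arbitrary: s rule: SN_induct)
  case (step w)
  note outer = step.IH
  from step.prems(1) show ?case using step.prems(2)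
  proof (induction s rule: SN_induct)
    case (step s)
    show ?case
    proof (rule cand_neutral[OF c])
      fix v assume "App (Lam w) s \<rightarrow>\<^sub>d v"
      from inv_App[OF this] show "v \<in> X"
      proof (elim disjE exE conjE)
        fix u assume "Lam w = Lam u" "v = subst u s 0"
        then show ?thesis using step.prems by simp
      next
        fix a b assume "Lam w = Pair a b" then show ?thesis by simp
      next
        fix t' assume "Lam w \<rightarrow>\<^sub>d t'" "v = App t' s"
        then obtain w' where "w \<rightarrow>\<^sub>d w'" "t' = Lam w'" using inv_Lam by blast
        moreover have "subst w' s 0 \<in> X"
          using cand_step[OF c step.prems subst_preserves[OF \<open>w \<rightarrow>\<^sub>d w'\<close>]] .
        ultimately show ?thesis using \<open>v = App t' s\<close> outer step.hyps by auto
      next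
        fix s' assume "s \<rightarrow>\<^sub>d s'" "v = App (Lam w) s'"
        moreover have "subst w s' 0 \<in> X"
          using cand_steps[OF c step.prems subst_preserves2[OF \<open>s \<rightarrow>\<^sub>d s'\<close>]] .
        ultimately show ?thesis using step.IH by auto
      qed
    qed (simp add: neutral_def)
  qed
qed


lemma fwd1:
  assumes cX: "cand X" and cY: "cand Y"
    and H: "\<forall>s\<in>X. Pi1 (App t s) \<in> Y" and sX: "s \<in> X"
  shows "App (Pi1 t) s \<in> Y"
proof -
  have "Pi1 (App t (Var 0)) \<in> SN" using H cand_Var[OF cX] cand_SN[OF cY] by blast
  then have tSN: "t \<in> SN"
    by (rule SN_reflect[rotated]) (auto intro: dist.intros)
  have sSN: "s \<in> SN" using cand_SN[OF cX sX] .
  from tSN show ?thesis using H sSN sX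
  proof (induction t arbitrary: s rule: SN_induct)
    case (step t)
    note outer = step.IH
    note Ht = step.prems(1)
    from step.prems(2) show ?case using step.prems(3)
    proof (induction s rule: SN_induct)
      case (step s)
      show ?case
      proof (rule cand_neutral[OF cY])
        fix v assume "App (Pi1 t) s \<rightarrow>\<^sub>d v"
        from inv_App[OF this] show "v \<in> Y"
        proof (elim disjE exE conjE)
          fix u assume "Pi1 t = Lam u" then show ?thesis by simp
        next
          fix a b assume "Pi1 t = Pair a b" then show ?thesis by simp
        next
          fix r assume r: "Pi1 t \<rightarrow>\<^sub>d r" "v = App r s"
          from inv_Pi1[OF r(1)] show ?thesis
          proof (elim disjE exE conjE)
            fix a b assume ab: "t = Pair a b" "r = a"
            have "Pi1 (App t s) \<in> Y" using Ht step.prems by blast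
            moreover have "Pi1 (App t s) \<rightarrow>\<^sub>d Pi1 (Pair (App a s) (App b s))"
              using ab by (auto intro: dist.intros)
            moreover have "Pi1 (Pair (App a s) (App b s)) \<rightarrow>\<^sub>d App a s"
              by (rule dist.proj1)
            ultimately show ?thesis using r ab cand_step[OF cY] by metis
          next
            fix u assume u: "t = Lam u" "r = Lam (Pi1 u)"
            have "Pi1 (App t s) \<in> Y" using Ht step.prems by blast
            moreover have "Pi1 (App t s) \<rightarrow>\<^sub>d Pi1 (subst u s 0)"
              using u by (auto intro: dist.intros)
            ultimately have in1: "subst (Pi1 u) s 0 \<in> Y" using cand_step[OF cY] by simp
            then have "Pi1 u \<in> SN" using cand_SN[OF cY] subst_SN by blast
            then have "App (Lam (Pi1 u)) s \<in> Y" using head_exp[OF cY] step.hyps in1 by blast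
            then show ?thesis using r u by simp
          next
            fix t' assume t': "t \<rightarrow>\<^sub>d t'" "r = Pi1 t'"
            have "\<forall>s\<in>X. Pi1 (App t' s) \<in> Y"
              using Ht t'(1) cand_step[OF cY] by (blast intro: dist.intros)
            then show ?thesis using outer[OF t'(1)] r t' step.hyps step.prems by blast
          qed
        next
          fix s' assume "s \<rightarrow>\<^sub>d s'" "v = App (Pi1 t) s'"
          then show ?thesis using step.IH step.prems cand_step[OF cX] by blast
        qed
      qed (simp add: neutral_def)
    qed
  qed
qed

lemma fwd2:
  assumes cX: "cand X" and cY: "cand Y"
    and H: "\<forall>s\<in>X. Pi2 (App t s) \<in> Y" and sX: "s \<in> X"
  shows "App (Pi2 t) s \<in> Y"
proof -
  have "Pi2 (App t (Var 0)) \<in> SN" using H cand_Var[OF cX] cand_SN[OF cY] by blast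
  then have tSN: "t \<in> SN"
    by (rule SN_reflect[rotated]) (auto intro: dist.intros)
  have sSN: "s \<in> SN" using cand_SN[OF cX sX] .
  from tSN show ?thesis using H sSN sX
  proof (induction t arbitrary: s rule: SN_induct)
    case (step t)
    note outer = step.IH
    note Ht = step.prems(1)
    from step.prems(2) show ?case using step.prems(3)
    proof (induction s rule: SN_induct)
      case (step s)
      show ?case
      proof (rule cand_neutral[OF cY])
        fix v assume "App (Pi2 t) s \<rightarrow>\<^sub>d v"
        from inv_App[OF this] show "v \<in> Y"
        proof (elim disjE exE conjE)
          fix u assume "Pi2 t = Lam u" then show ?thesis by simp
        next
          fix a b assume "Pi2 t = Pair a b" then show ?thesis by simp
        next
          fix r assume r: "Pi2 t \<rightarrow>\<^sub>d r" "v = App r s"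
          from inv_Pi2[OF r(1)] show ?thesis
          proof (elim disjE exE conjE)
            fix a b assume ab: "t = Pair a b" "r = b"
            have "Pi2 (App t s) \<in> Y" using Ht step.prems by blast
            moreover have "Pi2 (App t s) \<rightarrow>\<^sub>d Pi2 (Pair (App a s) (App b s))"
              using ab by (auto intro: dist.intros)
            moreover have "Pi2 (Pair (App a s) (App b s)) \<rightarrow>\<^sub>d App b s"
              by (rule dist.proj2)
            ultimately show ?thesis using r ab cand_step[OF cY] by metis
          next
            fix u assume u: "t = Lam u" "r = Lam (Pi2 u)"
            have "Pi2 (App t s) \<in> Y" using Ht step.prems by blast
            moreover have "Pi2 (App t s) \<rightarrow>\<^sub>d Pi2 (subst u s 0)"
              using u by (auto intro: dist.intros)
            ultimately have in1: "subst (Pi2 u) s 0 \<in> Y" using cand_step[OF cY] by simp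
            then have "Pi2 u \<in> SN" using cand_SN[OF cY] subst_SN by blast
            then have "App (Lam (Pi2 u)) s \<in> Y" using head_exp[OF cY] step.hyps in1 by blast
            then show ?thesis using r u by simp
          next
            fix t' assume t': "t \<rightarrow>\<^sub>d t'" "r = Pi2 t'"
            have "\<forall>s\<in>X. Pi2 (App t' s) \<in> Y"
              using Ht t'(1) cand_step[OF cY] by (blast intro: dist.intros)
            then show ?thesis using outer[OF t'(1)] r t' step.hyps step.prems by blast
          qed
        next
          fix s' assume "s \<rightarrow>\<^sub>d s'" "v = App (Pi2 t) s'"
          then show ?thesis using step.IH step.prems cand_step[OF cX] by blast
        qed
      qed (simp add: neutral_def)
    qed
  qed
qed


lemma bwd1:
  assumes cX: "cand X" and cY: "cand Y" and cZ: "cand Z"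
    and H: "\<forall>s\<in>X. App (Pi1 t) s \<in> Y" and H2: "\<forall>s\<in>X. App (Pi2 t) s \<in> Z" and sX: "s \<in> X"
  shows "Pi1 (App t s) \<in> Y"
proof -
  have "App (Pi1 t) (Var 0) \<in> SN" using H cand_Var[OF cX] cand_SN[OF cY] by blast
  then have tSN: "t \<in> SN"
    by (rule SN_reflect[rotated]) (auto intro: dist.intros)
  have sSN: "s \<in> SN" using cand_SN[OF cX sX] .
  from tSN show ?thesis using H H2 sSN sX
  proof (induction t arbitrary: s rule: SN_induct)
    case (step t)
    note outer = step.IH
    note Ht = step.prems(1)
    note Ht2 = step.prems(2)
    from step.prems(3) show ?case using step.prems(4)
    proof (induction s rule: SN_induct)
      case (step s)
      show ?case
      proof (rule cand_neutral[OF cY])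
        fix v assume "Pi1 (App t s) \<rightarrow>\<^sub>d v"
        from inv_Pi1[OF this] show "v \<in> Y"
        proof (elim disjE exE conjE)
          fix a b assume "App t s = Pair a b" then show ?thesis by simp
        next
          fix u assume "App t s = Lam u" then show ?thesis by simp
        next
          fix r assume r: "App t s \<rightarrow>\<^sub>d r" "v = Pi1 r"
          from inv_App[OF r(1)] show ?thesis
          proof (elim disjE exE conjE)
            fix u assume u: "t = Lam u" "r = subst u s 0"
            have "App (Pi1 t) s \<in> Y" using Ht step.prems by blast
            moreover have "App (Pi1 t) s \<rightarrow>\<^sub>d App (Lam (Pi1 u)) s"
              using u by (auto intro: dist.intros)
            ultimately have "App (Lam (Pi1 u)) s \<in> Y" by (rule cand_step[OF cY])
            then have "subst (Pi1 u) s 0 \<in> Y" by (rule cand_step[OF cY]) (rule dist.beta)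
            then show ?thesis using r u by simp
          next
            fix a b assume ab: "t = Pair a b" "r = Pair (App a s) (App b s)"
            have "App (Pi1 t) s \<in> Y" using Ht step.prems by blast
            moreover have "App (Pi1 t) s \<rightarrow>\<^sub>d App a s"
              using ab by (auto intro: dist.intros)
            ultimately have in1: "App a s \<in> Y" using cand_step[OF cY] by blast
            have "App (Pi2 t) s \<in> Z" using Ht2 step.prems by blast
            moreover have "App (Pi2 t) s \<rightarrow>\<^sub>d App b s"
              using ab by (auto intro: dist.intros)
            ultimately have "App b s \<in> SN" using cand_step[OF cZ] cand_SN[OF cZ] by blast
            then show ?thesis using cand_Pi1_Pair[OF cY in1] r ab by simp
          next
            fix t' assume t': "t \<rightarrow>\<^sub>d t'" "r = App t' s"
            have "\<forall>s\<in>X. App (Pi1 t') s \<in> Y"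
              using Ht t'(1) cand_step[OF cY] by (blast intro: dist.intros)
            moreover have "\<forall>s\<in>X. App (Pi2 t') s \<in> Z"
              using Ht2 t'(1) cand_step[OF cZ] by (blast intro: dist.intros)
            ultimately show ?thesis using outer[OF t'(1)] r t' step.hyps step.prems by blast
          next
            fix s' assume "s \<rightarrow>\<^sub>d s'" "r = App t s'"
            then show ?thesis using r step.IH step.prems cand_step[OF cX] by blast
          qed
        qed
      qed (simp add: neutral_def)
    qed
  qed
qed

lemma bwd2:
  assumes cX: "cand X" and cY: "cand Y" and cZ: "cand Z"
    and H: "\<forall>s\<in>X. App (Pi2 t) s \<in> Y" and H2: "\<forall>s\<in>X. App (Pi1 t) s \<in> Z" and sX: "s \<in> X"
  shows "Pi2 (App t s) \<in> Y"
proof -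
  have "App (Pi2 t) (Var 0) \<in> SN" using H cand_Var[OF cX] cand_SN[OF cY] by blast
  then have tSN: "t \<in> SN"
    by (rule SN_reflect[rotated]) (auto intro: dist.intros)
  have sSN: "s \<in> SN" using cand_SN[OF cX sX] .
  from tSN show ?thesis using H H2 sSN sX
  proof (induction t arbitrary: s rule: SN_induct)
    case (step t)
    note outer = step.IH
    note Ht = step.prems(1)
    note Ht2 = step.prems(2)
    from step.prems(3) show ?case using step.prems(4)
    proof (induction s rule: SN_induct)
      case (step s)
      show ?case
      proof (rule cand_neutral[OF cY])
        fix v assume "Pi2 (App t s) \<rightarrow>\<^sub>d v"
        from inv_Pi2[OF this] show "v \<in> Y"
        proof (elim disjE exE conjE)
          fix a b assume "App t s = Pair a b" then show ?thesis by simp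
        next
          fix u assume "App t s = Lam u" then show ?thesis by simp
        next
          fix r assume r: "App t s \<rightarrow>\<^sub>d r" "v = Pi2 r"
          from inv_App[OF r(1)] show ?thesis
          proof (elim disjE exE conjE)
            fix u assume u: "t = Lam u" "r = subst u s 0"
            have "App (Pi2 t) s \<in> Y" using Ht step.prems by blast
            moreover have "App (Pi2 t) s \<rightarrow>\<^sub>d App (Lam (Pi2 u)) s"
              using u by (auto intro: dist.intros)
            ultimately have "App (Lam (Pi2 u)) s \<in> Y" by (rule cand_step[OF cY])
            then have "subst (Pi2 u) s 0 \<in> Y" by (rule cand_step[OF cY]) (rule dist.beta)
            then show ?thesis using r u by simp
          next
            fix a b assume ab: "t = Pair a b" "r = Pair (App a s) (App b s)"
            have "App (Pi2 t) s \<in> Y" using Ht step.prems by blast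
            moreover have "App (Pi2 t) s \<rightarrow>\<^sub>d App b s"
              using ab by (auto intro: dist.intros)
            ultimately have in1: "App b s \<in> Y" using cand_step[OF cY] by blast
            have "App (Pi1 t) s \<in> Z" using Ht2 step.prems by blast
            moreover have "App (Pi1 t) s \<rightarrow>\<^sub>d App a s"
              using ab by (auto intro: dist.intros)
            ultimately have "App a s \<in> SN" using cand_step[OF cZ] cand_SN[OF cZ] by blast
            then show ?thesis using cand_Pi2_Pair[OF cY in1] r ab by simp
          next
            fix t' assume t': "t \<rightarrow>\<^sub>d t'" "r = App t' s"
            have "\<forall>s\<in>X. App (Pi2 t') s \<in> Y"
              using Ht t'(1) cand_step[OF cY] by (blast intro: dist.intros)
            moreover have "\<forall>s\<in>X. App (Pi1 t') s \<in> Z"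
              using Ht2 t'(1) cand_step[OF cZ] by (blast intro: dist.intros)
            ultimately show ?thesis using outer[OF t'(1)] r t' step.hyps step.prems by blast
          next
            fix s' assume "s \<rightarrow>\<^sub>d s'" "r = App t s'"
            then show ?thesis using r step.IH step.prems cand_step[OF cX] by blast
          qed
        qed
      qed (simp add: neutral_def)
    qed
  qed
qed

theorem lemma7:
  fixes A B :: ty
  assumes "A \<equiv>\<^sub>T B"
  shows "interp A = interp B"
  using assms
proof (induction rule: typ_eq.induct)
  case (ax A B C)
  note c = cand_interp[of A] cand_interp[of B] cand_interp[of C]
  show ?case
  proof (rule set_eqI, rule iffI)
    fix t assume "t \<in> interp (Fun A (Conj B C))"
    then have h1: "\<forall>s\<in>interp A. Pi1 (App t s) \<in> interp B"
      and h2: "\<forall>s\<in>interp A. Pi2 (App t s) \<in> interp C" by auto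
    show "t \<in> interp (Conj (Fun A B) (Fun A C))"
      using fwd1[OF c(1,2) h1] fwd2[OF c(1,3) h2] by simp
  next
    fix t assume "t \<in> interp (Conj (Fun A B) (Fun A C))"
    then have h1: "\<forall>s\<in>interp A. App (Pi1 t) s \<in> interp B"
      and h2: "\<forall>s\<in>interp A. App (Pi2 t) s \<in> interp C" by auto
    show "t \<in> interp (Fun A (Conj B C))"
      using bwd1[OF c(1,2,3) h1 h2] bwd2[OF c(1,3,2) h2 h1] by simp
  qed
qed simp_all

end
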